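(* Let $\mathcal{C}$ and $\mathcal{E}$ be categories with finite limits and small coproducts in which actions of groups by automorphisms are effective, and let $F\colon\mathcal{C}\to\mathcal{E}$ be a functor preserving finite limits. If $F$ preserves strict epimorphisms and coproducts, then $F$ preserves quotients by actions of groups: for every group $H$ acting on an object $X$ of $\mathcal{C}$ with quotient $q\colon X\to X/H$, the arrow $F(q)$ is the quotient of $F(X)$ by the induced action of $H$.
   Context: An arrow $f\colon X\to Y$ is a strict epimorphism if for every $g\colon X\to Z$ compatible with $f$ (for all objects $C$ and $u,v\colon C\to X$, $f\circ u=f\circ v$ implies $g\circ u=g\circ v$) there is a unique $k$ with $g=k\circ f$. For a group $H$ acting on $X$ by automorphisms (homomorphism $H\to\mathrm{Aut}(X)^{op}$) the quotient $q\colon X\to X/H$ is universal among arrows with $q\circ h=q$ for all $h\in H$. Let $X\bullet H=\coprod_{h\in H}X$ with injections $\lambda_h$, $\nabla\colon X\bullet H\to X$ the codiagonal and $\nabla_H\colon X\bullet H\to X$ the arrow with $\nabla_H\circ\lambda_h=h$. The action is effective if the quotient $q$ exists and the induced arrow $(\nabla,\nabla_H)\colon X\bullet H\to R_q$ into the kernel pair $R_q\subseteq X\times X$ of $q$ is a strict epimorphism. *)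

theory Defs
  imports "HOL-Algebra.Group"
begin

record ('o, 'm) category =
  Obj :: "'o set"
  Arr :: "'m set"
  Dom :: "'m \<Rightarrow> 'o"
  Cod :: "'m \<Rightarrow> 'o"
  Cmp :: "'m \<Rightarrow> 'm \<Rightarrow> 'm"   (* Cmp C g f = g \<circ> f *)
  Idt :: "'o \<Rightarrow> 'm"

definition hom :: "('o, 'm) category \<Rightarrow> 'o \<Rightarrow> 'o \<Rightarrow> 'm set" where
  "hom C X Y = {f \<in> Arr C. Dom C f = X \<and> Cod C f = Y}"

definition is_category :: "('o, 'm) category \<Rightarrow> bool" where
  "is_category C \<longleftrightarrow>
     (\<forall>f \<in> Arr C. Dom C f \<in> Obj C \<and> Cod C f \<in> Obj C) \<and>
     (\<forall>X \<in> Obj C. Idt C X \<in> hom C X X) \<and>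
     (\<forall>X \<in> Obj C. \<forall>Y \<in> Obj C. \<forall>Z \<in> Obj C. \<forall>f \<in> hom C X Y. \<forall>g \<in> hom C Y Z.
        Cmp C g f \<in> hom C X Z) \<and>
     (\<forall>f \<in> Arr C. Cmp C (Idt C (Cod C f)) f = f \<and> Cmp C f (Idt C (Dom C f)) = f) \<and>
     (\<forall>f \<in> Arr C. \<forall>g \<in> Arr C. \<forall>h \<in> Arr C. Cod C f = Dom C g \<longrightarrow> Cod C g = Dom C h \<longrightarrow>
        Cmp C h (Cmp C g f) = Cmp C (Cmp C h g) f)"

definition is_terminal :: "('o, 'm) category \<Rightarrow> 'o \<Rightarrow> bool" where
  "is_terminal C T \<longleftrightarrow> T \<in> Obj C \<and> (\<forall>X \<in> Obj C. \<exists>!t. t \<in> hom C X T)"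

definition is_pullback ::
  "('o, 'm) category \<Rightarrow> 'm \<Rightarrow> 'm \<Rightarrow> 'o \<Rightarrow> 'm \<Rightarrow> 'm \<Rightarrow> bool" where
  "is_pullback C f g P p1 p2 \<longleftrightarrow>
     f \<in> Arr C \<and> g \<in> Arr C \<and> Cod C f = Cod C g \<and> P \<in> Obj C \<and>
     p1 \<in> hom C P (Dom C f) \<and> p2 \<in> hom C P (Dom C g) \<and>
     Cmp C f p1 = Cmp C g p2 \<and>
     (\<forall>Z \<in> Obj C. \<forall>u \<in> hom C Z (Dom C f). \<forall>v \<in> hom C Z (Dom C g).
        Cmp C f u = Cmp C g v \<longrightarrow>
        (\<exists>!k. k \<in> hom C Z P \<and> Cmp C p1 k = u \<and> Cmp C p2 k = v))"

definition has_finite_limits :: "('o, 'm) category \<Rightarrow> bool" where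
  "has_finite_limits C \<longleftrightarrow>
     (\<exists>T. is_terminal C T) \<and>
     (\<forall>f \<in> Arr C. \<forall>g \<in> Arr C. Cod C f = Cod C g \<longrightarrow> (\<exists>P p1 p2. is_pullback C f g P p1 p2))"

definition is_coproduct ::
  "('o, 'm) category \<Rightarrow> 'i set \<Rightarrow> ('i \<Rightarrow> 'o) \<Rightarrow> 'o \<Rightarrow> ('i \<Rightarrow> 'm) \<Rightarrow> bool" where
  "is_coproduct C I A P inc \<longleftrightarrow>
     P \<in> Obj C \<and> (\<forall>i \<in> I. A i \<in> Obj C \<and> inc i \<in> hom C (A i) P) \<and>
     (\<forall>Z \<in> Obj C. \<forall>f. (\<forall>i \<in> I. f i \<in> hom C (A i) Z) \<longrightarrow>
        (\<exists>!k. k \<in> hom C P Z \<and> (\<forall>i \<in> I. Cmp C k (inc i) = f i)))"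

text \<open>Small coproducts: coproducts of all families indexed by subsets of the
  (arbitrary) index type 'i.\<close>
definition has_coproducts :: "'i itself \<Rightarrow> ('o, 'm) category \<Rightarrow> bool" where
  "has_coproducts _ C \<longleftrightarrow>
     (\<forall>(I :: 'i set) A. (\<forall>i \<in> I. A i \<in> Obj C) \<longrightarrow> (\<exists>P inc. is_coproduct C I A P inc))"

definition is_strict_epi :: "('o, 'm) category \<Rightarrow> 'm \<Rightarrow> bool" where
  "is_strict_epi C f \<longleftrightarrow> f \<in> Arr C \<and>
     (\<forall>g \<in> Arr C. Dom C g = Dom C f \<longrightarrow>
        (\<forall>U \<in> Obj C. \<forall>u \<in> hom C U (Dom C f). \<forall>v \<in> hom C U (Dom C f).
            Cmp C f u = Cmp C f v \<longrightarrow> Cmp C g u = Cmp C g v) \<longrightarrow>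
        (\<exists>!k. k \<in> hom C (Cod C f) (Cod C g) \<and> Cmp C k f = g))"

text \<open>A homomorphism H -> Aut(X)^op: alpha(g h) = alpha h o alpha g.\<close>
definition is_action :: "('o, 'm) category \<Rightarrow> ('g, 'b) monoid_scheme \<Rightarrow> 'o \<Rightarrow> ('g \<Rightarrow> 'm) \<Rightarrow> bool" where
  "is_action C H X \<alpha> \<longleftrightarrow>
     X \<in> Obj C \<and> (\<forall>h \<in> carrier H. \<alpha> h \<in> hom C X X) \<and>
     \<alpha> \<one>\<^bsub>H\<^esub> = Idt C X \<and>
     (\<forall>g \<in> carrier H. \<forall>h \<in> carrier H. \<alpha> (g \<otimes>\<^bsub>H\<^esub> h) = Cmp C (\<alpha> h) (\<alpha> g))"

definition is_quotient ::
  "('o, 'm) category \<Rightarrow> ('g, 'b) monoid_scheme \<Rightarrow> 'o \<Rightarrow> ('g \<Rightarrow> 'm) \<Rightarrow> 'm \<Rightarrow> 'o \<Rightarrow> bool" where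
  "is_quotient C H X \<alpha> q Q \<longleftrightarrow>
     Q \<in> Obj C \<and> q \<in> hom C X Q \<and> (\<forall>h \<in> carrier H. Cmp C q (\<alpha> h) = q) \<and>
     (\<forall>Z \<in> Obj C. \<forall>g \<in> hom C X Z. (\<forall>h \<in> carrier H. Cmp C g (\<alpha> h) = g) \<longrightarrow>
        (\<exists>!k. k \<in> hom C Q Z \<and> Cmp C k q = g))"

text \<open>Effective action: the quotient exists, and for X \<bullet> H = coproduct of copies of X
  indexed by H, the arrow (nabla, nabla_H) : X \<bullet> H -> R_q into the kernel pair of q
  is a strict epimorphism (for any choice of these universal objects).\<close>
definition is_effective ::
  "('o, 'm) category \<Rightarrow> ('g, 'b) monoid_scheme \<Rightarrow> 'o \<Rightarrow> ('g \<Rightarrow> 'm) \<Rightarrow> bool" where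
  "is_effective C H X \<alpha> \<longleftrightarrow>
     (\<exists>q Q. is_quotient C H X \<alpha> q Q) \<and>
     (\<forall>q Q XH lam nab nabH R p1 p2 e.
        is_quotient C H X \<alpha> q Q \<longrightarrow>
        is_coproduct C (carrier H) (\<lambda>_. X) XH lam \<longrightarrow>
        nab \<in> hom C XH X \<longrightarrow> (\<forall>h \<in> carrier H. Cmp C nab (lam h) = Idt C X) \<longrightarrow>
        nabH \<in> hom C XH X \<longrightarrow> (\<forall>h \<in> carrier H. Cmp C nabH (lam h) = \<alpha> h) \<longrightarrow>
        is_pullback C q q R p1 p2 \<longrightarrow>
        e \<in> hom C XH R \<longrightarrow> Cmp C p1 e = nab \<longrightarrow> Cmp C p2 e = nabH \<longrightarrow>
        is_strict_epi C e)"

definition actions_effective :: "('g, 'b) monoid_scheme itself \<Rightarrow> ('o, 'm) category \<Rightarrow> bool" where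
  "actions_effective _ C \<longleftrightarrow>
     (\<forall>(H :: ('g, 'b) monoid_scheme) X \<alpha>. group H \<longrightarrow> is_action C H X \<alpha> \<longrightarrow> is_effective C H X \<alpha>)"

definition is_functor ::
  "('o, 'm) category \<Rightarrow> ('p, 'n) category \<Rightarrow> ('o \<Rightarrow> 'p) \<Rightarrow> ('m \<Rightarrow> 'n) \<Rightarrow> bool" where
  "is_functor C E Fo Fm \<longleftrightarrow>
     (\<forall>X \<in> Obj C. Fo X \<in> Obj E) \<and>
     (\<forall>f \<in> Arr C. Fm f \<in> hom E (Fo (Dom C f)) (Fo (Cod C f))) \<and>
     (\<forall>X \<in> Obj C. Fm (Idt C X) = Idt E (Fo X)) \<and>
     (\<forall>f \<in> Arr C. \<forall>g \<in> Arr C. Cod C f = Dom C g \<longrightarrow> Fm (Cmp C g f) = Cmp E (Fm g) (Fm f))"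

definition preserves_finite_limits ::
  "('o, 'm) category \<Rightarrow> ('p, 'n) category \<Rightarrow> ('o \<Rightarrow> 'p) \<Rightarrow> ('m \<Rightarrow> 'n) \<Rightarrow> bool" where
  "preserves_finite_limits C E Fo Fm \<longleftrightarrow>
     (\<forall>T. is_terminal C T \<longrightarrow> is_terminal E (Fo T)) \<and>
     (\<forall>f g P p1 p2. is_pullback C f g P p1 p2 \<longrightarrow> is_pullback E (Fm f) (Fm g) (Fo P) (Fm p1) (Fm p2))"

definition preserves_strict_epis ::
  "('o, 'm) category \<Rightarrow> ('p, 'n) category \<Rightarrow> ('o \<Rightarrow> 'p) \<Rightarrow> ('m \<Rightarrow> 'n) \<Rightarrow> bool" where
  "preserves_strict_epis C E Fo Fm \<longleftrightarrow> (\<forall>f. is_strict_epi C f \<longrightarrow> is_strict_epi E (Fm f))"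

definition preserves_coproducts ::
  "'i itself \<Rightarrow> ('o, 'm) category \<Rightarrow> ('p, 'n) category \<Rightarrow> ('o \<Rightarrow> 'p) \<Rightarrow> ('m \<Rightarrow> 'n) \<Rightarrow> bool" where
  "preserves_coproducts _ C E Fo Fm \<longleftrightarrow>
     (\<forall>(I :: 'i set) A P inc. is_coproduct C I A P inc \<longrightarrow>
        is_coproduct E I (Fo \<circ> A) (Fo P) (Fm \<circ> inc))"

end

theory Submission
  imports Defs
begin

lemma homD: "f \<in> hom C X Y \<Longrightarrow> f \<in> Arr C \<and> Dom C f = X \<and> Cod C f = Y"
  by (simp add: hom_def)

lemma homI: "f \<in> Arr C \<Longrightarrow> f \<in> hom C (Dom C f) (Cod C f)"
  by (simp add: hom_def)

lemma cat_obj: "is_category C \<Longrightarrow> f \<in> hom C X Y \<Longrightarrow> X \<in> Obj C \<and> Y \<in> Obj C"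
proof -
  assume C: "is_category C" and f: "f \<in> hom C X Y"
  have "\<forall>f \<in> Arr C. Dom C f \<in> Obj C \<and> Cod C f \<in> Obj C"
    using C unfolding is_category_def by (elim conjE)
  then show ?thesis using f unfolding hom_def by auto
qed

lemma cat_comp: "is_category C \<Longrightarrow> f \<in> hom C X Y \<Longrightarrow> g \<in> hom C Y Z \<Longrightarrow> Cmp C g f \<in> hom C X Z"
proof -
  assume C: "is_category C" and f: "f \<in> hom C X Y" and g: "g \<in> hom C Y Z"
  have ax: "\<forall>X \<in> Obj C. \<forall>Y \<in> Obj C. \<forall>Z \<in> Obj C. \<forall>f \<in> hom C X Y. \<forall>g \<in> hom C Y Z.
        Cmp C g f \<in> hom C X Z"
    using C unfolding is_category_def by (elim conjE)
  have "X \<in> Obj C" "Y \<in> Obj C" using cat_obj[OF C f] by auto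
  moreover have "Z \<in> Obj C" using cat_obj[OF C g] by auto
  ultimately show ?thesis using ax f g by blast
qed

lemma cat_assoc: "is_category C \<Longrightarrow> f \<in> hom C X Y \<Longrightarrow> g \<in> hom C Y Z \<Longrightarrow> h \<in> hom C Z W
   \<Longrightarrow> Cmp C h (Cmp C g f) = Cmp C (Cmp C h g) f"
proof -
  assume C: "is_category C" and f: "f \<in> hom C X Y" and g: "g \<in> hom C Y Z" and h: "h \<in> hom C Z W"
  have ax: "\<forall>f \<in> Arr C. \<forall>g \<in> Arr C. \<forall>h \<in> Arr C. Cod C f = Dom C g \<longrightarrow> Cod C g = Dom C h \<longrightarrow>
        Cmp C h (Cmp C g f) = Cmp C (Cmp C h g) f"
    using C unfolding is_category_def by (elim conjE)
  have "f \<in> Arr C" "g \<in> Arr C" "h \<in> Arr C" "Cod C f = Dom C g" "Cod C g = Dom C h"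
    using f g h unfolding hom_def by auto
  then show ?thesis using ax by blast
qed

lemma cat_idl: "is_category C \<Longrightarrow> f \<in> hom C X Y \<Longrightarrow> Cmp C (Idt C Y) f = f"
proof -
  assume C: "is_category C" and f: "f \<in> hom C X Y"
  have ax: "\<forall>f \<in> Arr C. Cmp C (Idt C (Cod C f)) f = f \<and> Cmp C f (Idt C (Dom C f)) = f"
    using C unfolding is_category_def by (elim conjE)
  then show ?thesis using f unfolding hom_def by auto
qed

lemma cat_idr: "is_category C \<Longrightarrow> f \<in> hom C X Y \<Longrightarrow> Cmp C f (Idt C X) = f"
proof -
  assume C: "is_category C" and f: "f \<in> hom C X Y"
  have ax: "\<forall>f \<in> Arr C. Cmp C (Idt C (Cod C f)) f = f \<and> Cmp C f (Idt C (Dom C f)) = f"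
    using C unfolding is_category_def by (elim conjE)
  then show ?thesis using f unfolding hom_def by auto
qed

lemma cat_id: "is_category C \<Longrightarrow> X \<in> Obj C \<Longrightarrow> Idt C X \<in> hom C X X"
proof -
  assume C: "is_category C" and X: "X \<in> Obj C"
  have ax: "\<forall>X \<in> Obj C. Idt C X \<in> hom C X X"
    using C unfolding is_category_def by (elim conjE)
  then show ?thesis using X by blast
qed

lemma fun_hom: "is_functor C E Fo Fm \<Longrightarrow> f \<in> hom C X Y \<Longrightarrow> Fm f \<in> hom E (Fo X) (Fo Y)"
  unfolding is_functor_def hom_def by auto

lemma fun_comp: "is_functor C E Fo Fm \<Longrightarrow> f \<in> hom C X Y \<Longrightarrow> g \<in> hom C Y Z
   \<Longrightarrow> Fm (Cmp C g f) = Cmp E (Fm g) (Fm f)"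
  unfolding is_functor_def hom_def by auto

lemma fun_id: "is_functor C E Fo Fm \<Longrightarrow> X \<in> Obj C \<Longrightarrow> Fm (Idt C X) = Idt E (Fo X)"
  unfolding is_functor_def by auto

lemma strict_epi_epi:
  assumes C: "is_category C" and se: "is_strict_epi C f" and f: "f \<in> hom C X Y"
    and a: "a \<in> hom C Y Z" and b: "b \<in> hom C Y Z" and eq: "Cmp C a f = Cmp C b f"
  shows "a = b"
proof -
  let ?g = "Cmp C a f"
  have g: "?g \<in> hom C X Z" using cat_comp[OF C f a] .
  have compat: "\<forall>U \<in> Obj C. \<forall>u \<in> hom C U (Dom C f). \<forall>v \<in> hom C U (Dom C f).
            Cmp C f u = Cmp C f v \<longrightarrow> Cmp C ?g u = Cmp C ?g v"
  proof (intro ballI impI)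
    fix U u v assume u: "u \<in> hom C U (Dom C f)" and v: "v \<in> hom C U (Dom C f)"
      and e: "Cmp C f u = Cmp C f v"
    have dfX: "Dom C f = X" using f by (simp add: hom_def)
    have u': "u \<in> hom C U X" and v': "v \<in> hom C U X" using u v dfX by simp_all
    have "Cmp C ?g u = Cmp C a (Cmp C f u)" by (rule cat_assoc[OF C u' f a, symmetric])
    also have "\<dots> = Cmp C a (Cmp C f v)" using e by simp
    also have "\<dots> = Cmp C ?g v" by (rule cat_assoc[OF C v' f a])
    finally show "Cmp C ?g u = Cmp C ?g v" .
  qed
  have garr: "?g \<in> Arr C" and gdom: "Dom C ?g = Dom C f" using g f by (simp_all add: hom_def)
  have ex: "\<exists>!k. k \<in> hom C (Cod C f) (Cod C ?g) \<and> Cmp C k f = ?g"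
    using se[unfolded is_strict_epi_def, THEN conjunct2, rule_format, OF garr gdom compat[rule_format]] .
  have cf: "Cod C f = Y" and cg: "Cod C ?g = Z" using f g by (simp_all add: hom_def)
  from ex obtain k where kk: "\<forall>y. y \<in> hom C Y Z \<and> Cmp C y f = ?g \<longrightarrow> y = k"
    unfolding cf cg by (elim ex1E) blast
  have "a = k" using kk a by simp
  moreover have "b = k" using kk b eq by simp
  ultimately show ?thesis by simp
qed

lemma quotient_strict_epi:
  assumes C: "is_category C" and act: "is_action C H X \<alpha>" and qt: "is_quotient C H X \<alpha> q Q"
  shows "is_strict_epi C q"
proof -
  have q: "q \<in> hom C X Q" and Q: "Q \<in> Obj C" using qt unfolding is_quotient_def by auto
  have X: "X \<in> Obj C" using act unfolding is_action_def by auto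
  show ?thesis unfolding is_strict_epi_def
  proof (intro conjI ballI impI)
    show "q \<in> Arr C" using q by (simp add: hom_def)
    fix g assume g: "g \<in> Arr C" and dg: "Dom C g = Dom C q"
      and compat: "\<forall>U \<in> Obj C. \<forall>u \<in> hom C U (Dom C q). \<forall>v \<in> hom C U (Dom C q).
            Cmp C q u = Cmp C q v \<longrightarrow> Cmp C g u = Cmp C g v"
    have g': "g \<in> hom C X (Cod C g)" using g dg q by (simp add: hom_def)
    have Z: "Cod C g \<in> Obj C" using cat_obj[OF C g'] by simp
    have inv: "\<forall>h \<in> carrier H. Cmp C g (\<alpha> h) = g"
    proof
      fix h assume h: "h \<in> carrier H"
      have ah: "\<alpha> h \<in> hom C X X" using act h unfolding is_action_def by auto
      have idX: "Idt C X \<in> hom C X X" using cat_id[OF C X] .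
      have q1: "Cmp C q (\<alpha> h) = q" using qt h unfolding is_quotient_def by blast
      have q2: "Cmp C q (\<alpha> h) = Cmp C q (Idt C X)" using q1 cat_idr[OF C q] by simp
      have dq: "Dom C q = X" using q by (simp add: hom_def)
      have c2: "\<forall>U \<in> Obj C. \<forall>u \<in> hom C U X. \<forall>v \<in> hom C U X.
            Cmp C q u = Cmp C q v \<longrightarrow> Cmp C g u = Cmp C g v" using compat unfolding dq .
      have "Cmp C g (\<alpha> h) = Cmp C g (Idt C X)" using c2[rule_format, OF X ah idX q2] .
      then show "Cmp C g (\<alpha> h) = g" using cat_idr[OF C g'] by simp
    qed
    have "\<exists>!k. k \<in> hom C Q (Cod C g) \<and> Cmp C k q = g"
      using qt[unfolded is_quotient_def, THEN conjunct2, THEN conjunct2, THEN conjunct2, rule_format, OF Z g' inv[rule_format]] .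
    moreover have "Cod C q = Q" using q by (simp add: hom_def)
    ultimately show "\<exists>!k. k \<in> hom C (Cod C q) (Cod C g) \<and> Cmp C k q = g" by simp
  qed
qed


lemma pb_parts:
  assumes "is_pullback C f g P p1 p2"
  shows "P \<in> Obj C" "p1 \<in> hom C P (Dom C f)" "p2 \<in> hom C P (Dom C g)"
    "Cmp C f p1 = Cmp C g p2"
  using assms unfolding is_pullback_def by blast+

lemma pb_univ:
  assumes "is_pullback C f g P p1 p2" "Z \<in> Obj C" "u \<in> hom C Z (Dom C f)"
    "v \<in> hom C Z (Dom C g)" "Cmp C f u = Cmp C g v"
  shows "\<exists>k. k \<in> hom C Z P \<and> Cmp C p1 k = u \<and> Cmp C p2 k = v"
proof -
  have "\<forall>Z \<in> Obj C. \<forall>u \<in> hom C Z (Dom C f). \<forall>v \<in> hom C Z (Dom C g).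
        Cmp C f u = Cmp C g v \<longrightarrow>
        (\<exists>!k. k \<in> hom C Z P \<and> Cmp C p1 k = u \<and> Cmp C p2 k = v)"
    using assms(1) unfolding is_pullback_def by (elim conjE)
  then have "\<exists>!k. k \<in> hom C Z P \<and> Cmp C p1 k = u \<and> Cmp C p2 k = v"
    using assms(2-5) by blast
  then show ?thesis by blast
qed

lemma cop_parts:
  assumes "is_coproduct C I A P inc"
  shows "P \<in> Obj C" "\<And>i. i \<in> I \<Longrightarrow> inc i \<in> hom C (A i) P"
  using assms unfolding is_coproduct_def by blast+

lemma cop_ex:
  assumes "is_coproduct C I A P inc" "Z \<in> Obj C" "\<And>i. i \<in> I \<Longrightarrow> f i \<in> hom C (A i) Z"
  shows "\<exists>k. k \<in> hom C P Z \<and> (\<forall>i \<in> I. Cmp C k (inc i) = f i)"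
proof -
  have "\<forall>Z \<in> Obj C. \<forall>f. (\<forall>i \<in> I. f i \<in> hom C (A i) Z) \<longrightarrow>
        (\<exists>!k. k \<in> hom C P Z \<and> (\<forall>i \<in> I. Cmp C k (inc i) = f i))"
    using assms(1) unfolding is_coproduct_def by (elim conjE)
  then have "\<exists>!k. k \<in> hom C P Z \<and> (\<forall>i \<in> I. Cmp C k (inc i) = f i)"
    using assms(2,3) by blast
  then show ?thesis by blast
qed

lemma cop_uniq:
  assumes "is_coproduct C I A P inc" "Z \<in> Obj C" "\<And>i. i \<in> I \<Longrightarrow> f i \<in> hom C (A i) Z"
    "k1 \<in> hom C P Z" "k2 \<in> hom C P Z" "\<And>i. i \<in> I \<Longrightarrow> Cmp C k1 (inc i) = f i"
    "\<And>i. i \<in> I \<Longrightarrow> Cmp C k2 (inc i) = f i"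
  shows "k1 = k2"
proof -
  have "\<forall>Z \<in> Obj C. \<forall>f. (\<forall>i \<in> I. f i \<in> hom C (A i) Z) \<longrightarrow>
        (\<exists>!k. k \<in> hom C P Z \<and> (\<forall>i \<in> I. Cmp C k (inc i) = f i))"
    using assms(1) unfolding is_coproduct_def by (elim conjE)
  then have "\<exists>!k. k \<in> hom C P Z \<and> (\<forall>i \<in> I. Cmp C k (inc i) = f i)"
    using assms(2,3) by blast
  then obtain k where kk: "\<forall>y. y \<in> hom C P Z \<and> (\<forall>i \<in> I. Cmp C y (inc i) = f i) \<longrightarrow> y = k"
    by (elim ex1E) blast
  have "k1 = k" using kk assms(4,6) by simp
  moreover have "k2 = k" using kk assms(5,7) by simp
  ultimately show ?thesis by simp
qed

theorem proposition5p19: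
  fixes C :: "('o, 'm) category" and E :: "('p, 'n) category"
    and Fo :: "'o \<Rightarrow> 'p" and Fm :: "'m \<Rightarrow> 'n"
  assumes "is_category C" and "is_category E"
    and "has_finite_limits C" and "has_finite_limits E"
    and "has_coproducts TYPE('g) C" and "has_coproducts TYPE('g) E"
    and "actions_effective TYPE(('g, 'b) monoid_scheme) C"
    and "actions_effective TYPE(('g, 'b) monoid_scheme) E"
    and "is_functor C E Fo Fm"
    and "preserves_finite_limits C E Fo Fm"
    and "preserves_strict_epis C E Fo Fm"
    and "preserves_coproducts TYPE('g) C E Fo Fm"
  shows "\<forall>(H :: ('g, 'b) monoid_scheme) X \<alpha> q Q.
           group H \<longrightarrow> is_action C H X \<alpha> \<longrightarrow> is_quotient C H X \<alpha> q Q \<longrightarrow>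
           is_quotient E H (Fo X) (Fm \<circ> \<alpha>) (Fm q) (Fo Q)"
proof (intro allI impI)
  fix H :: "('g, 'b) monoid_scheme" and X \<alpha> q Q
  assume grp: "group H" and act: "is_action C H X \<alpha>" and qt: "is_quotient C H X \<alpha> q Q"
  note C = assms(1) and E = assms(2) and F = assms(9)
  have X: "X \<in> Obj C" using act unfolding is_action_def by blast
  have ah: "\<And>h. h \<in> carrier H \<Longrightarrow> \<alpha> h \<in> hom C X X" using act unfolding is_action_def by blast
  have Q: "Q \<in> Obj C" and q: "q \<in> hom C X Q" using qt unfolding is_quotient_def by blast+
  have qinv: "\<And>h. h \<in> carrier H \<Longrightarrow> Cmp C q (\<alpha> h) = q" using qt unfolding is_quotient_def by blast
  have idX: "Idt C X \<in> hom C X X" using cat_id[OF C X] .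
  have Fq: "Fm q \<in> hom E (Fo X) (Fo Q)" using fun_hom[OF F q] .
  have FQ: "Fo Q \<in> Obj E" using F Q unfolding is_functor_def by blast
  have Fse: "is_strict_epi E (Fm q)"
    using assms(11)[unfolded preserves_strict_epis_def, rule_format, OF quotient_strict_epi[OF C act qt]] .
  obtain XH lam where cop: "is_coproduct C (carrier H) (\<lambda>_. X) XH lam"
    using assms(5)[unfolded has_coproducts_def, rule_format, of "carrier H" "\<lambda>_. X"] X by blast
  have XH: "XH \<in> Obj C" and lam: "\<And>h. h \<in> carrier H \<Longrightarrow> lam h \<in> hom C X XH"
    using cop_parts[OF cop] by auto
  obtain nab where nab: "nab \<in> hom C XH X" and nabl: "\<forall>h \<in> carrier H. Cmp C nab (lam h) = Idt C X"
    using cop_ex[OF cop X, of "\<lambda>_. Idt C X"] idX by blast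
  obtain nabH where nabH: "nabH \<in> hom C XH X" and nabHl: "\<forall>h \<in> carrier H. Cmp C nabH (lam h) = \<alpha> h"
    using cop_ex[OF cop X, of \<alpha>] ah by blast
  have qn: "Cmp C q nab = Cmp C q nabH"
  proof (rule cop_uniq[OF cop Q, of "\<lambda>_. q"])
    show "\<And>i. i \<in> carrier H \<Longrightarrow> q \<in> hom C X Q" using q .
    show "Cmp C q nab \<in> hom C XH Q" using cat_comp[OF C nab q] .
    show "Cmp C q nabH \<in> hom C XH Q" using cat_comp[OF C nabH q] .
    fix i assume i: "i \<in> carrier H"
    have nli: "Cmp C nab (lam i) = Idt C X" using nabl i by blast
    have nhi: "Cmp C nabH (lam i) = \<alpha> i" using nabHl i by blast
    have "Cmp C (Cmp C q nab) (lam i) = Cmp C q (Cmp C nab (lam i))"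
      by (rule cat_assoc[OF C lam[OF i] nab q, symmetric])
    also have "\<dots> = q" unfolding nli by (rule cat_idr[OF C q])
    finally show "Cmp C (Cmp C q nab) (lam i) = q" .
    have "Cmp C (Cmp C q nabH) (lam i) = Cmp C q (Cmp C nabH (lam i))"
      by (rule cat_assoc[OF C lam[OF i] nabH q, symmetric])
    also have "\<dots> = q" unfolding nhi by (rule qinv[OF i])
    finally show "Cmp C (Cmp C q nabH) (lam i) = q" .
  qed
  have qarr: "q \<in> Arr C" and dq: "Dom C q = X" and cq: "Cod C q = Q" using q by (simp_all add: hom_def)
  obtain R p1 p2 where pb: "is_pullback C q q R p1 p2"
    using assms(3)[unfolded has_finite_limits_def, THEN conjunct2, rule_format, OF qarr qarr refl] by blast
  have R: "R \<in> Obj C" and p1: "p1 \<in> hom C R X" and p2: "p2 \<in> hom C R X"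
    using pb_parts[OF pb] dq by auto
  obtain e where e: "e \<in> hom C XH R" and e1: "Cmp C p1 e = nab" and e2: "Cmp C p2 e = nabH"
    using pb_univ[OF pb XH] nab nabH qn dq by auto
  have eff: "is_effective C H X \<alpha>"
    using assms(7)[unfolded actions_effective_def, rule_format, OF grp act] .
  have ese: "is_strict_epi C e"
    using eff[unfolded is_effective_def, THEN conjunct2, rule_format, OF qt cop nab nabl[rule_format] nabH nabHl[rule_format] pb e e1 e2] .
  have Fese: "is_strict_epi E (Fm e)"
    using assms(11)[unfolded preserves_strict_epis_def, rule_format, OF ese] .
  have Fpb: "is_pullback E (Fm q) (Fm q) (Fo R) (Fm p1) (Fm p2)"
    using assms(10)[unfolded preserves_finite_limits_def, THEN conjunct2, rule_format, OF pb] .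
  have Fcop: "is_coproduct E (carrier H) (Fo \<circ> (\<lambda>_. X)) (Fo XH) (Fm \<circ> lam)"
    using assms(12)[unfolded preserves_coproducts_def, rule_format, OF cop] .
  have Fp1: "Fm p1 \<in> hom E (Fo R) (Fo X)" using fun_hom[OF F p1] .
  have Fp2: "Fm p2 \<in> hom E (Fo R) (Fo X)" using fun_hom[OF F p2] .
  have Fe: "Fm e \<in> hom E (Fo XH) (Fo R)" using fun_hom[OF F e] .
  have Fnab: "Fm nab \<in> hom E (Fo XH) (Fo X)" using fun_hom[OF F nab] .
  have FnabH: "Fm nabH \<in> hom E (Fo XH) (Fo X)" using fun_hom[OF F nabH] .
  have Flam: "\<And>h. h \<in> carrier H \<Longrightarrow> Fm (lam h) \<in> hom E (Fo X) (Fo XH)" using fun_hom[OF F lam] .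
  show "is_quotient E H (Fo X) (Fm \<circ> \<alpha>) (Fm q) (Fo Q)"
    unfolding is_quotient_def
  proof (intro conjI ballI impI)
    show "Fo Q \<in> Obj E" using FQ .
    show "Fm q \<in> hom E (Fo X) (Fo Q)" using Fq .
    fix h assume h: "h \<in> carrier H"
    show "Cmp E (Fm q) ((Fm \<circ> \<alpha>) h) = Fm q"
      using fun_comp[OF F ah[OF h] q] qinv[OF h] by simp
  next
    fix Z g assume Z: "Z \<in> Obj E" and g: "g \<in> hom E (Fo X) Z"
      and ginv: "\<forall>h \<in> carrier H. Cmp E g ((Fm \<circ> \<alpha>) h) = g"
    have gn: "Cmp E g (Fm nab) = Cmp E g (Fm nabH)"
    proof (rule cop_uniq[OF Fcop Z, of "\<lambda>_. g"])
      show "\<And>i. i \<in> carrier H \<Longrightarrow> g \<in> hom E ((Fo \<circ> (\<lambda>_. X)) i) Z" using g by simp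
      show "Cmp E g (Fm nab) \<in> hom E (Fo XH) Z" using cat_comp[OF E Fnab g] .
      show "Cmp E g (Fm nabH) \<in> hom E (Fo XH) Z" using cat_comp[OF E FnabH g] .
      fix i assume i: "i \<in> carrier H"
      have nli: "Cmp C nab (lam i) = Idt C X" using nabl i by blast
      have nhi: "Cmp C nabH (lam i) = \<alpha> i" using nabHl i by blast
      have gi: "Cmp E g (Fm (\<alpha> i)) = g" using ginv i by auto
      have "Cmp E (Cmp E g (Fm nab)) ((Fm \<circ> lam) i) = Cmp E g (Cmp E (Fm nab) (Fm (lam i)))"
        unfolding comp_apply by (rule cat_assoc[OF E Flam[OF i] Fnab g, symmetric])
      also have "\<dots> = Cmp E g (Fm (Cmp C nab (lam i)))" by (simp only: fun_comp[OF F lam[OF i] nab])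
      also have "\<dots> = Cmp E g (Idt E (Fo X))" by (simp only: nli fun_id[OF F X])
      also have "\<dots> = g" using cat_idr[OF E g] .
      finally show "Cmp E (Cmp E g (Fm nab)) ((Fm \<circ> lam) i) = g" .
      have "Cmp E (Cmp E g (Fm nabH)) ((Fm \<circ> lam) i) = Cmp E g (Cmp E (Fm nabH) (Fm (lam i)))"
        unfolding comp_apply by (rule cat_assoc[OF E Flam[OF i] FnabH g, symmetric])
      also have "\<dots> = Cmp E g (Fm (Cmp C nabH (lam i)))" by (simp only: fun_comp[OF F lam[OF i] nabH])
      also have "\<dots> = Cmp E g (Fm (\<alpha> i))" by (simp only: nhi)
      also have "\<dots> = g" using gi .
      finally show "Cmp E (Cmp E g (Fm nabH)) ((Fm \<circ> lam) i) = g" .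
    qed
    have gp: "Cmp E g (Fm p1) = Cmp E g (Fm p2)"
    proof (rule strict_epi_epi[OF E Fese Fe])
      show "Cmp E g (Fm p1) \<in> hom E (Fo R) Z" using cat_comp[OF E Fp1 g] .
      show "Cmp E g (Fm p2) \<in> hom E (Fo R) Z" using cat_comp[OF E Fp2 g] .
      have "Cmp E (Cmp E g (Fm p1)) (Fm e) = Cmp E g (Cmp E (Fm p1) (Fm e))"
        by (rule cat_assoc[OF E Fe Fp1 g, symmetric])
      also have "\<dots> = Cmp E g (Fm (Cmp C p1 e))" by (simp only: fun_comp[OF F e p1])
      also have "\<dots> = Cmp E g (Fm (Cmp C p2 e))" by (simp only: e1 e2 gn)
      also have "\<dots> = Cmp E g (Cmp E (Fm p2) (Fm e))" by (simp only: fun_comp[OF F e p2])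
      also have "\<dots> = Cmp E (Cmp E g (Fm p2)) (Fm e)"
        by (rule cat_assoc[OF E Fe Fp2 g])
      finally show "Cmp E (Cmp E g (Fm p1)) (Fm e) = Cmp E (Cmp E g (Fm p2)) (Fm e)" .
    qed
    have dFq: "Dom E (Fm q) = Fo X" and cFq: "Cod E (Fm q) = Fo Q" using Fq by (simp_all add: hom_def)
    have garr: "g \<in> Arr E" and dg: "Dom E g = Dom E (Fm q)" and cg: "Cod E g = Z"
      using g dFq by (simp_all add: hom_def)
    have compat: "\<And>U u v. U \<in> Obj E \<Longrightarrow> u \<in> hom E U (Dom E (Fm q)) \<Longrightarrow> v \<in> hom E U (Dom E (Fm q))
        \<Longrightarrow> Cmp E (Fm q) u = Cmp E (Fm q) v \<Longrightarrow> Cmp E g u = Cmp E g v"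
    proof -
      fix U u v assume U: "U \<in> Obj E" and u: "u \<in> hom E U (Dom E (Fm q))"
        and v: "v \<in> hom E U (Dom E (Fm q))" and uv: "Cmp E (Fm q) u = Cmp E (Fm q) v"
      obtain k where k: "k \<in> hom E U (Fo R)" and k1: "Cmp E (Fm p1) k = u" and k2: "Cmp E (Fm p2) k = v"
        using pb_univ[OF Fpb U u v uv] by blast
      have "Cmp E g u = Cmp E g (Cmp E (Fm p1) k)" by (simp only: k1)
      also have "\<dots> = Cmp E (Cmp E g (Fm p1)) k" by (rule cat_assoc[OF E k Fp1 g])
      also have "\<dots> = Cmp E (Cmp E g (Fm p2)) k" by (simp only: gp)
      also have "\<dots> = Cmp E g (Cmp E (Fm p2) k)" by (rule cat_assoc[OF E k Fp2 g, symmetric])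
      also have "\<dots> = Cmp E g v" by (simp only: k2)
      finally show "Cmp E g u = Cmp E g v" .
    qed
    have "\<exists>!k. k \<in> hom E (Cod E (Fm q)) (Cod E g) \<and> Cmp E k (Fm q) = g"
      using Fse[unfolded is_strict_epi_def, THEN conjunct2, rule_format, OF garr dg compat] .
    then show "\<exists>!k. k \<in> hom E (Fo Q) Z \<and> Cmp E k (Fm q) = g" unfolding cFq cg .
  qed
qed

end
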